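(* Let $\mathbf{x}_k\in\mathbb{R}^d$ and $\epsilon>0$, suppose the sampled estimates $\mathbf{B}_k,\mathbf{T}_k$ at $\mathbf{x}_k$ (together with $\mathbf{g}_k$) satisfy the sampling condition with accuracy $\epsilon$ and constants $\kappa_g,\kappa_b,\kappa_t>0$, and set $\epsilon_2:=\epsilon^{2/3}$. Then for all $\mathbf{s}\in\mathbb{R}^d$, $$\|\nabla^2 f(\mathbf{x}_k+\mathbf{s})-\nabla^2_{\mathbf{s}}\phi_k(\mathbf{s})\|\le\left(\frac{L_t}{2}+\frac{\kappa_t}{2}\right)\|\mathbf{s}\|^2+\left(\kappa_b+\frac{\kappa_t}{2}\right)\epsilon_2,$$ where $\nabla^2_{\mathbf{s}}\phi_k(\mathbf{s})=\mathbf{B}_k+\mathbf{T}_k[\mathbf{s}]$ and the norm is the spectral norm.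
   Context: $f(\mathbf{x})=\frac1n\sum_{i=1}^n f_i(\mathbf{x})$, each $f_i\in C^3(\mathbb{R}^d,\mathbb{R})$ with $f_i,\nabla f_i,\nabla^2 f_i,\nabla^3 f_i$ Lipschitz with constants $L_f,L_g,L_b,L_t$ (norm on third-order tensors: $\|A\|_{[3]}=\max_{\|\mathbf{h}_1\|=\|\mathbf{h}_2\|=\|\mathbf{h}_3\|=1}|A[\mathbf{h}_1,\mathbf{h}_2,\mathbf{h}_3]|$). For a third-order tensor $T$: $T[\mathbf{s}]$ is the matrix $(\sum_iT_{ijk}s_i)_{jk}$, $T[\mathbf{s}]^2=(\sum_{j,k}T_{ijk}s_js_k)_i$, $T[\mathbf{s}]^3=\sum_{i,j,k}T_{ijk}s_is_js_k$. Sampled estimates: $\mathbf{g}_k=\frac{1}{|\mathcal{S}^g|}\sum_{i\in\mathcal{S}^g}\nabla f_i(\mathbf{x}_k)$, $\mathbf{B}_k=\frac{1}{|\mathcal{S}^b|}\sum_{i\in\mathcal{S}^b}\nabla^2 f_i(\mathbf{x}_k)$, $\mathbf{T}_k=\frac{1}{|\mathcal{S}^t|}\sum_{i\in\mathcal{S}^t}\nabla^3 f_i(\mathbf{x}_k)$. $\phi_k(\mathbf{s})=f(\mathbf{x}_k)+\mathbf{g}_k^\top\mathbf{s}+\frac12\mathbf{s}^\top\mathbf{B}_k\mathbf{s}+\frac16\mathbf{T}_k[\mathbf{s}]^3$. Sampling condition (accuracy $\epsilon$): $\|\mathbf{g}_k-\nabla f(\mathbf{x}_k)\|\le\kappa_g\epsilon$;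 $\|(\mathbf{B}_k-\nabla^2 f(\mathbf{x}_k))\mathbf{s}\|\le\kappa_b\epsilon^{2/3}\|\mathbf{s}\|$ and $\|\mathbf{T}_k[\mathbf{s}]^2-\nabla^3 f(\mathbf{x}_k)[\mathbf{s}]^2\|\le\kappa_t\epsilon^{1/3}\|\mathbf{s}\|^2$ for all $\mathbf{s}\in\mathbb{R}^d$. *)

theory Defs
  imports "HOL-Analysis.Analysis"
begin

text \<open>Vectors in R^d are \<open>real^'d\<close>, matrices \<open>real^'d^'d\<close>, third-order tensors
  \<open>real^'d^'d^'d\<close> with entry \<open>T$i$j$k\<close> = T_ijk.\<close>

definition spec_norm :: "real^'d^'d \<Rightarrow> real" where
  "spec_norm A = onorm (\<lambda>v. A *v v)"

definition tensor_app3 :: "real^'d^'d^'d \<Rightarrow> real^'d \<Rightarrow> real^'d \<Rightarrow> real^'d \<Rightarrow> real" where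
  "tensor_app3 T h1 h2 h3 = (\<Sum>i\<in>UNIV. \<Sum>j\<in>UNIV. \<Sum>k\<in>UNIV. T$i$j$k * h1$i * h2$j * h3$k)"

definition tensor_norm :: "real^'d^'d^'d \<Rightarrow> real" where
  "tensor_norm T = Sup {\<bar>tensor_app3 T h1 h2 h3\<bar> | h1 h2 h3.
                          norm h1 = 1 \<and> norm h2 = 1 \<and> norm h3 = 1}"

definition tensor_mat :: "real^'d^'d^'d \<Rightarrow> real^'d \<Rightarrow> real^'d^'d" where
  "tensor_mat T s = (\<chi> j k. \<Sum>i\<in>UNIV. T$i$j$k * s$i)"

definition tensor_vec :: "real^'d^'d^'d \<Rightarrow> real^'d \<Rightarrow> real^'d" where
  "tensor_vec T s = (\<chi> i. \<Sum>j\<in>UNIV. \<Sum>k\<in>UNIV. T$i$j$k * s$j * s$k)"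

definition avg :: "nat set \<Rightarrow> (nat \<Rightarrow> 'a::real_vector) \<Rightarrow> 'a" where
  "avg S F = (1 / real (card S)) *\<^sub>R (\<Sum>i\<in>S. F i)"

end

theory Submission imports Defs begin

lemma tm_diff: "tensor_mat (A - B) s = tensor_mat A s - tensor_mat B s"
  by (simp add: tensor_mat_def vec_eq_iff sum_subtractf left_diff_distrib)
lemma tm_scaleR: "tensor_mat (c *\<^sub>R A) s = c *\<^sub>R tensor_mat A s"
  by (simp add: tensor_mat_def vec_eq_iff sum_distrib_left mult.assoc)
lemma tm_sum: "tensor_mat (sum F S) s = (\<Sum>i\<in>S. tensor_mat (F i) s)"
  by (induction S rule: infinite_finite_induct)
     (auto simp: tensor_mat_def vec_eq_iff sum.distrib distrib_right)
lemma tm_scaleR_right: "tensor_mat A (c *\<^sub>R s) = c *\<^sub>R tensor_mat A s"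
  by (simp add: tensor_mat_def vec_eq_iff sum_distrib_left algebra_simps)
lemma tm_add_right: "tensor_mat A (s + t) = tensor_mat A s + tensor_mat A t"
  by (simp add: tensor_mat_def vec_eq_iff sum.distrib algebra_simps)
lemma tv_diff: "tensor_vec (A - B) s = tensor_vec A s - tensor_vec B s"
  by (simp add: tensor_vec_def vec_eq_iff sum_subtractf left_diff_distrib)

lemma mv_sum: "(sum F S) *v (v::real^'n) = (\<Sum>i\<in>S. F i *v v)"
  by (induction S rule: infinite_finite_induct) (auto simp: algebra_simps)

lemma tensor_app3_bound:
  assumes "norm h1 = 1" "norm h2 = 1" "norm h3 = 1"
  shows "\<bar>tensor_app3 T h1 h2 h3\<bar> \<le> (\<Sum>i\<in>UNIV. \<Sum>j\<in>UNIV. \<Sum>k\<in>UNIV. \<bar>T$i$j$k\<bar>)"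
  unfolding tensor_app3_def
proof (rule order_trans[OF sum_abs], rule sum_mono, rule order_trans[OF sum_abs], rule sum_mono,
       rule order_trans[OF sum_abs], rule sum_mono)
  fix i j k
  have a: "\<bar>h1$i\<bar> \<le> 1" "\<bar>h2$j\<bar> \<le> 1" "\<bar>h3$k\<bar> \<le> 1"
    using component_le_norm_cart[of h1 i] component_le_norm_cart[of h2 j] component_le_norm_cart[of h3 k] assms by auto
  have "\<bar>T$i$j$k * h1$i * h2$j * h3$k\<bar> = \<bar>T$i$j$k\<bar> * (\<bar>h1$i\<bar> * \<bar>h2$j\<bar> * \<bar>h3$k\<bar>)"
    by (simp add: abs_mult)
  also have "\<dots> \<le> \<bar>T$i$j$k\<bar> * 1"
    apply (rule mult_left_mono) using a by (auto intro!: mult_le_one)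
  finally show "\<bar>T$i$j$k * h1$i * h2$j * h3$k\<bar> \<le> \<bar>T$i$j$k\<bar>" by simp
qed

lemma tensor_app3_le_norm:
  assumes "norm h1 = 1" "norm h2 = 1" "norm h3 = 1"
  shows "\<bar>tensor_app3 T h1 h2 h3\<bar> \<le> tensor_norm T"
  unfolding tensor_norm_def
  apply (rule cSup_upper)
  using assms apply blast
  apply (rule bdd_aboveI[where M="\<Sum>i\<in>UNIV. \<Sum>j\<in>UNIV. \<Sum>k\<in>UNIV. \<bar>T$i$j$k\<bar>"])
  using tensor_app3_bound by blast

lemma tensor_app3_scale:
  "tensor_app3 T (a *\<^sub>R h1) (b *\<^sub>R h2) (c *\<^sub>R h3) = a * b * c * tensor_app3 T h1 h2 h3"
  by (simp add: tensor_app3_def sum_distrib_left algebra_simps)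

lemma tensor_app3_mv: "tensor_app3 T h w v = w \<bullet> (tensor_mat T h *v v)"
proof -
  have "tensor_app3 T h w v = (\<Sum>j\<in>UNIV. \<Sum>i\<in>UNIV. \<Sum>k\<in>UNIV. T$i$j$k * h$i * w$j * v$k)"
    unfolding tensor_app3_def by (rule sum.swap)
  also have "\<dots> = (\<Sum>j\<in>UNIV. \<Sum>k\<in>UNIV. \<Sum>i\<in>UNIV. T$i$j$k * h$i * w$j * v$k)"
    by (rule sum.cong, simp, rule sum.swap)
  also have "\<dots> = w \<bullet> (tensor_mat T h *v v)"
    unfolding tensor_mat_def matrix_vector_mult_def inner_vec_def
    by (simp add: sum_distrib_left sum_distrib_right algebra_simps)
  finally show ?thesis .
qed


lemma tensor_norm_nonneg: "0 \<le> tensor_norm (T::real^'d^'d^'d)"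
proof -
  obtain i :: 'd where True by auto
  have "norm (axis i (1::real)) = 1" by simp
  then show ?thesis using tensor_app3_le_norm[of "axis i 1" "axis i 1" "axis i 1" T] by linarith
qed

lemma tensor_mat_bound:
  "norm (tensor_mat T h *v v) \<le> tensor_norm (T::real^'d^'d^'d) * norm h * norm v"
proof (cases "h = 0 \<or> v = 0 \<or> tensor_mat T h *v v = 0")
  case True
  have "0 \<le> tensor_norm T * norm h * norm v" using tensor_norm_nonneg[of T] by simp
  moreover have "h = 0 \<Longrightarrow> tensor_mat T h = 0"
    by (simp add: tensor_mat_def vec_eq_iff)
  ultimately show ?thesis using True by auto
next
  case False
  define y where "y = tensor_mat T h *v v"
  have hp: "norm h > 0" and vp: "norm v > 0" and yp: "norm y > 0" using False y_def by auto
  have "tensor_app3 T ((1/norm h) *\<^sub>R h) ((1/norm y) *\<^sub>R y) ((1/norm v) *\<^sub>R v)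
        = (1/norm h) * (1/norm y) * (1/norm v) * (y \<bullet> y)"
    unfolding tensor_app3_scale by (simp add: tensor_app3_mv y_def)
  also have "\<dots> = norm y / (norm h * norm v)"
    using yp by (simp add: power2_norm_eq_inner[symmetric] power2_eq_square field_simps)
  finally have eq: "tensor_app3 T ((1/norm h) *\<^sub>R h) ((1/norm y) *\<^sub>R y) ((1/norm v) *\<^sub>R v) = norm y / (norm h * norm v)" .
  have "\<bar>tensor_app3 T ((1/norm h) *\<^sub>R h) ((1/norm y) *\<^sub>R y) ((1/norm v) *\<^sub>R v)\<bar> \<le> tensor_norm T"
    by (rule tensor_app3_le_norm) (use hp vp yp in auto)
  then have "norm y / (norm h * norm v) \<le> tensor_norm T" using eq by simp
  then show ?thesis using hp vp unfolding y_def by (simp add: field_simps mult.assoc)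
qed

lemma quad_form_tensor: "u \<bullet> (tensor_mat D s *v u) = s \<bullet> tensor_vec D u"
proof -
  have "s \<bullet> tensor_vec D u = (\<Sum>i\<in>UNIV. \<Sum>j\<in>UNIV. \<Sum>k\<in>UNIV. D$i$j$k * s$i * u$j * u$k)"
    unfolding tensor_vec_def inner_vec_def by (simp add: sum_distrib_left algebra_simps)
  also have "\<dots> = (\<Sum>j\<in>UNIV. \<Sum>i\<in>UNIV. \<Sum>k\<in>UNIV. D$i$j$k * s$i * u$j * u$k)"
    by (rule sum.swap)
  also have "\<dots> = (\<Sum>j\<in>UNIV. \<Sum>k\<in>UNIV. \<Sum>i\<in>UNIV. D$i$j$k * s$i * u$j * u$k)"
    by (rule sum.cong, simp, rule sum.swap)
  also have "\<dots> = u \<bullet> (tensor_mat D s *v u)"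
    unfolding tensor_mat_def matrix_vector_mult_def inner_vec_def
    by (simp add: sum_distrib_left sum_distrib_right algebra_simps)
  finally show ?thesis by simp
qed

lemma sym_inner:
  fixes M :: "real^'n^'n"
  assumes sym: "\<And>j k. M$j$k = M$k$j"
  shows "v \<bullet> (M *v w) = w \<bullet> (M *v v)"
proof -
  have "transpose M = M" using sym by (simp add: transpose_def vec_eq_iff)
  then have "v \<bullet> (M *v w) = (v v* M) \<bullet> w" by (simp add: dot_lmul_matrix)
  also have "\<dots> = (transpose M *v v) \<bullet> w" by simp
  also have "\<dots> = w \<bullet> (M *v v)" using \<open>transpose M = M\<close> by (simp add: inner_commute)
  finally show ?thesis .
qed

lemma sym_quad_bound:
  fixes M :: "real^'n^'n"
  assumes sym: "\<And>j k. M$j$k = M$k$j"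
    and q: "\<And>u. \<bar>u \<bullet> (M *v u)\<bar> \<le> lam * (norm u)\<^sup>2"
  shows "norm (M *v v) \<le> lam * norm v"
proof (cases "v = 0 \<or> M *v v = 0")
  case True
  have "0 \<le> lam" using q[of "axis undefined 1"] by simp
  then show ?thesis using True by auto
next
  case False
  define y where "y = M *v v"
  have vp: "norm v > 0" and yp: "norm y > 0" using False y_def by auto
  define w where "w = (norm v / norm y) *\<^sub>R y"
  have nw: "norm w = norm v" using yp by (simp add: w_def)
  have wy: "w \<bullet> y = norm v * norm y"
    using yp by (simp add: w_def power2_norm_eq_inner[symmetric] power2_eq_square)
  have sw: "v \<bullet> (M *v w) = w \<bullet> (M *v v)" by (rule sym_inner[OF sym])
  have pol: "(w + v) \<bullet> (M *v (w + v)) - (w - v) \<bullet> (M *v (w - v)) = 4 * (w \<bullet> (M *v v))"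
    using sw by (simp add: matrix_vector_right_distrib matrix_vector_mult_diff_distrib inner_add_left inner_add_right inner_diff_left inner_diff_right)
  have "4 * (w \<bullet> (M *v v)) \<le> \<bar>(w + v) \<bullet> (M *v (w + v))\<bar> + \<bar>(w - v) \<bullet> (M *v (w - v))\<bar>"
    using pol by linarith
  also have "\<dots> \<le> lam * (norm (w+v))\<^sup>2 + lam * (norm (w-v))\<^sup>2"
    using q by (intro add_mono) auto
  also have "\<dots> = lam * (2 * (norm w)\<^sup>2 + 2 * (norm v)\<^sup>2)"
    by (simp add: power2_norm_eq_inner inner_add_left inner_add_right inner_diff_left inner_diff_right inner_commute algebra_simps)
  finally have "4 * (norm v * norm y) \<le> lam * (4 * (norm v)\<^sup>2)"
    using wy nw y_def by (simp add: algebra_simps)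
  then have "norm v * norm y \<le> norm v * (lam * norm v)" by (simp add: power2_eq_square algebra_simps)
  then show ?thesis using vp y_def by simp
qed


lemma bl_mv: "bounded_linear (\<lambda>v. (M::real^'n^'m) *v v)"
  by (simp add: linear_conv_bounded_linear)

lemma bl_mv_left: "bounded_linear (\<lambda>M. (M::real^'n^'m) *v v)"
proof -
  have "linear (\<lambda>M. (M::real^'n^'m) *v v)"
    by (rule linearI) (simp_all add: matrix_vector_mult_add_rdistrib scaleR_matrix_vector_assoc)
  then show ?thesis by (simp add: linear_conv_bounded_linear)
qed

lemma spec_norm_nonneg: "0 \<le> spec_norm (M::real^'n^'n)"
  unfolding spec_norm_def by (rule onorm_pos_le[OF bl_mv])

lemma spec_norm_bound: "norm (M *v v) \<le> spec_norm (M::real^'n^'n) * norm v"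
  unfolding spec_norm_def by (rule onorm[OF bl_mv])

lemma grad_taylor1:
  fixes g :: "real^'d \<Rightarrow> real^'d" and H :: "real^'d \<Rightarrow> real^'d^'d"
  assumes dg: "\<And>x. (g has_derivative (\<lambda>h. H x *v h)) (at x)"
    and lip: "\<And>x y. spec_norm (H x - H y) \<le> L * norm (x - y)"
    and L: "0 \<le> L"
  shows "norm (g b - g a - H x *v (b - a)) \<le> L * (norm (a - x) + norm (b - a)) * norm (b - a)"
proof -
  let ?S = "closed_segment a b"
  let ?f = "\<lambda>u. g u - H x *v u"
  have der: "(?f has_derivative (\<lambda>v. H u *v v - H x *v v)) (at u within ?S)" for u
    by (rule has_derivative_at_withinI, rule has_derivative_diff[OF dg bounded_linear_imp_has_derivative[OF bl_mv]])
  have bnd: "onorm (\<lambda>v. H u *v v - H x *v v) \<le> L * (norm (a - x) + norm (b - a))" if "u \<in> ?S" for u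
  proof -
    have n1: "norm (u - a) \<le> norm (b - a)" using segment_bound1[OF that] .
    have "norm (u - x) \<le> norm (u - a) + norm (a - x)"
      using norm_triangle_ineq[of "u - a" "a - x"] by simp
    then have nu: "norm (u - x) \<le> norm (a - x) + norm (b - a)" using n1 by linarith
    have "onorm (\<lambda>v. H u *v v - H x *v v) = spec_norm (H u - H x)"
    proof -
      have "(\<lambda>v. H u *v v - H x *v v) = (*v) (H u - H x)"
        by (rule ext) (simp add: matrix_vector_mult_diff_rdistrib)
      then show ?thesis unfolding spec_norm_def by simp
    qed
    also have "\<dots> \<le> L * norm (u - x)" by (rule lip)
    also have "\<dots> \<le> L * (norm (a - x) + norm (b - a))" using nu L by (rule mult_left_mono)
    finally show ?thesis .
  qed
  have "norm (?f b - ?f a) \<le> L * (norm (a - x) + norm (b - a)) * norm (b - a)"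
    by (rule differentiable_bound[OF convex_closed_segment der bnd]) (simp_all add: ends_in_segment)
  moreover have "?f b - ?f a = g b - g a - H x *v (b - a)"
    by (simp add: matrix_vector_mult_diff_distrib)
  ultimately show ?thesis by simp
qed


lemma path_deriv:
  fixes f :: "real^'d \<Rightarrow> real"
  assumes df: "\<And>x. (f has_derivative (\<lambda>h. g x \<bullet> h)) (at x)"
  shows "((\<lambda>s. f (p + s *\<^sub>R h)) has_derivative (\<lambda>ds. ds *\<^sub>R (g (p + s *\<^sub>R h) \<bullet> h))) (at s)"
proof -
  have 1: "((\<lambda>s. p + s *\<^sub>R h) has_derivative (\<lambda>ds. ds *\<^sub>R h)) (at s)"
    by (intro derivative_eq_intros) auto
  have "((\<lambda>s. f (p + s *\<^sub>R h)) has_derivative (\<lambda>ds. g (p + s *\<^sub>R h) \<bullet> (ds *\<^sub>R h))) (at s)"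
    by (rule has_derivative_compose[OF 1 df])
  then show ?thesis by (simp add: mult.commute)
qed

lemma cont_from_deriv:
  assumes "\<And>s. (F has_derivative F' s) (at s)"
  shows "continuous_on S (F :: real \<Rightarrow> real)"
  by (rule continuous_at_imp_continuous_on) (auto intro: has_derivative_continuous[OF assms])

lemma schwarz_aux:
  fixes f :: "real^'d \<Rightarrow> real" and g :: "real^'d \<Rightarrow> real^'d" and H :: "real^'d \<Rightarrow> real^'d^'d"
  assumes df: "\<And>x. (f has_derivative (\<lambda>h. g x \<bullet> h)) (at x)"
    and dg: "\<And>x. (g has_derivative (\<lambda>h. H x *v h)) (at x)"
    and lip: "\<And>x y. spec_norm (H x - H y) \<le> L * norm (x - y)"
    and L: "0 \<le> L" and tpos: "0 < t"
  shows "\<bar>f (x + t *\<^sub>R k + t *\<^sub>R h) - f (x + t *\<^sub>R h) - f (x + t *\<^sub>R k) + f x - t^2 * (h \<bullet> (H x *v k))\<bar>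
          \<le> L * (norm h + norm k) * norm k * norm h * t^3"
proof -
  define c where "c = h \<bullet> (H x *v k)"
  define C where "C = L * (norm h + norm k) * norm k * norm h"
  define F where "F s = f ((x + t *\<^sub>R k) + s *\<^sub>R h) - f (x + s *\<^sub>R h) - s * t * c" for s
  define F' where "F' s = g ((x + t *\<^sub>R k) + s *\<^sub>R h) \<bullet> h - g (x + s *\<^sub>R h) \<bullet> h - t * c" for s
  have dF: "(F has_derivative (\<lambda>ds. ds *\<^sub>R F' s)) (at s)" for s
  proof -
    have "((\<lambda>s. f ((x + t *\<^sub>R k) + s *\<^sub>R h) - f (x + s *\<^sub>R h) - s * (t * c)) has_derivative
          (\<lambda>ds. ds *\<^sub>R (g ((x + t *\<^sub>R k) + s *\<^sub>R h) \<bullet> h) - ds *\<^sub>R (g (x + s *\<^sub>R h) \<bullet> h) - ds * (t * c))) (at s)"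
      by (intro has_derivative_diff path_deriv[OF df] has_derivative_mult_left has_derivative_ident)
    then show ?thesis unfolding F_def F'_def by (simp add: algebra_simps)
  qed
  have bnd: "norm (F' s) \<le> C * t^2" if s: "0 < s" "s < t" for s
  proof -
    define a where "a = x + s *\<^sub>R h"
    have e: "F' s = h \<bullet> (g (a + t *\<^sub>R k) - g a - H x *v (a + t *\<^sub>R k - a))"
      unfolding F'_def a_def c_def
      by (simp add: inner_diff_right matrix_vector_mult_scaleR add_ac inner_commute)
    have "norm (g (a + t *\<^sub>R k) - g a - H x *v (a + t *\<^sub>R k - a))
          \<le> L * (norm (a - x) + norm (a + t *\<^sub>R k - a)) * norm (a + t *\<^sub>R k - a)"
      by (rule grad_taylor1[OF dg lip L])
    also have "\<dots> = L * (s * norm h + t * norm k) * (t * norm k)"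
      using s tpos by (simp add: a_def)
    also have "\<dots> \<le> L * (t * norm h + t * norm k) * (t * norm k)"
      using s L by (intro mult_right_mono mult_left_mono add_right_mono) auto
    finally have gb: "norm (g (a + t *\<^sub>R k) - g a - H x *v (a + t *\<^sub>R k - a)) \<le> L * (t * norm h + t * norm k) * (t * norm k)" .
    have "norm (F' s) \<le> norm h * norm (g (a + t *\<^sub>R k) - g a - H x *v (a + t *\<^sub>R k - a))"
      unfolding e real_norm_def by (rule Cauchy_Schwarz_ineq2)
    also have "\<dots> \<le> norm h * (L * (t * norm h + t * norm k) * (t * norm k))"
      by (rule mult_left_mono[OF gb]) simp
    also have "\<dots> = C * t^2" by (simp add: C_def power2_eq_square algebra_simps)
    finally show ?thesis .
  qed
  have "norm (F t - F 0) \<le> C * t^2 * t - C * t^2 * 0"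
  proof (rule differentiable_bound_general[OF tpos, where f' = F' and \<phi>' = "\<lambda>_. C * t^2"])
    show "continuous_on {0..t} F" by (rule cont_from_deriv[OF dF])
    show "continuous_on {0..t} (\<lambda>s. C * t^2 * s)" by (intro continuous_intros)
    show "(F has_vector_derivative F' s) (at s)" for s
      unfolding has_vector_derivative_def by (rule dF)
    show "((\<lambda>s. C * t^2 * s) has_vector_derivative C * t^2) (at s)" for s
      unfolding has_vector_derivative_def by (auto intro!: derivative_eq_intros)
    show "norm (F' s) \<le> C * t^2" if "0 < s" "s < t" for s using bnd that .
  qed
  moreover have "F t - F 0 = f (x + t *\<^sub>R k + t *\<^sub>R h) - f (x + t *\<^sub>R h) - f (x + t *\<^sub>R k) + f x - t^2 * c"
    unfolding F_def by (simp add: power2_eq_square)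
  ultimately show ?thesis by (simp add: c_def C_def power2_eq_square power3_eq_cube algebra_simps)
qed


lemma small_eq0:
  fixes c D :: real
  assumes "\<And>t. 0 < t \<Longrightarrow> \<bar>c\<bar> \<le> D * t"
  shows "c = 0"
proof (rule ccontr)
  assume "c \<noteq> 0"
  then have cp: "\<bar>c\<bar> > 0" by simp
  have D0: "D \<ge> 0" using assms[of 1] cp by simp
  define t where "t = \<bar>c\<bar> / (2 * (D + 1))"
  have tp: "t > 0" using cp D0 by (simp add: t_def)
  have "D * t < \<bar>c\<bar>"
  proof -
    have "D * t = \<bar>c\<bar> * (D / (2 * (D + 1)))" by (simp add: t_def)
    also have "D / (2 * (D + 1)) < 1" using D0 by (simp add: field_simps)
    then have "\<bar>c\<bar> * (D / (2 * (D + 1))) < \<bar>c\<bar> * 1" using cp by (intro mult_strict_left_mono) auto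
    finally show ?thesis by simp
  qed
  then show False using assms[OF tp] by simp
qed

lemma hess_sym:
  fixes f :: "real^'d \<Rightarrow> real" and g :: "real^'d \<Rightarrow> real^'d" and H :: "real^'d \<Rightarrow> real^'d^'d"
  assumes df: "\<And>x. (f has_derivative (\<lambda>h. g x \<bullet> h)) (at x)"
    and dg: "\<And>x. (g has_derivative (\<lambda>h. H x *v h)) (at x)"
    and lip: "\<And>x y. spec_norm (H x - H y) \<le> L * norm (x - y)"
  shows "H x $ j $ k = H x $ k $ j"
proof -
  have L: "0 \<le> L"
    using spec_norm_nonneg[of "H (x + axis j 1) - H x"] lip[of "x + axis j 1" x] by simp
  define h :: "real^'d" where "h = axis k 1"
  define kk :: "real^'d" where "kk = axis j 1"
  define C where "C = L * (norm h + norm kk) * norm kk * norm h + L * (norm kk + norm h) * norm h * norm kk"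
  have "h \<bullet> (H x *v kk) - kk \<bullet> (H x *v h) = 0"
  proof (rule small_eq0[where D = C])
    fix t :: real assume tp: "0 < t"
    note a1 = schwarz_aux[OF df dg lip L tp, of x kk h]
    note a2 = schwarz_aux[OF df dg lip L tp, of x h kk]
    have sw: "x + t *\<^sub>R h + t *\<^sub>R kk = x + t *\<^sub>R kk + t *\<^sub>R h" by (simp add: add_ac)
    define A where "A = f (x + t *\<^sub>R kk + t *\<^sub>R h) - f (x + t *\<^sub>R h) - f (x + t *\<^sub>R kk) + f x"
    have b1: "\<bar>A - t^2 * (h \<bullet> (H x *v kk))\<bar> \<le> L * (norm h + norm kk) * norm kk * norm h * t^3"
      using a1 unfolding A_def .
    have b2: "\<bar>A - t^2 * (kk \<bullet> (H x *v h))\<bar> \<le> L * (norm kk + norm h) * norm h * norm kk * t^3"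
      using a2 unfolding A_def sw by (simp add: algebra_simps)
    have "\<bar>t^2 * (h \<bullet> (H x *v kk)) - t^2 * (kk \<bullet> (H x *v h))\<bar> \<le> C * t^3"
      using b1 b2 unfolding C_def by (simp add: algebra_simps)
    then have "t^2 * \<bar>h \<bullet> (H x *v kk) - kk \<bullet> (H x *v h)\<bar> \<le> C * t^3"
      by (simp add: abs_mult right_diff_distrib[symmetric])
    then have "t^2 * \<bar>h \<bullet> (H x *v kk) - kk \<bullet> (H x *v h)\<bar> \<le> t^2 * (C * t)"
      by (simp add: power2_eq_square power3_eq_cube algebra_simps)
    then show "\<bar>h \<bullet> (H x *v kk) - kk \<bullet> (H x *v h)\<bar> \<le> C * t"
      using tp by simp
  qed
  then have "h \<bullet> (H x *v kk) = kk \<bullet> (H x *v h)" by simp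
  then show ?thesis
    unfolding h_def kk_def by (simp add: inner_axis' matrix_vector_mult_basis column_def)
qed


lemma bl_nth2: "bounded_linear (\<lambda>M::real^'n^'n. M $ j $ k)"
  using bounded_linear_compose[OF bounded_linear_vec_nth[of k] bounded_linear_vec_nth[of j]] by simp

lemma tmat_sym:
  fixes Hf :: "real^'d \<Rightarrow> real^'d^'d" and T :: "real^'d \<Rightarrow> real^'d^'d^'d"
  assumes dH: "\<And>y. (Hf has_derivative (\<lambda>h. tensor_mat (T y) h)) (at y)"
    and sym: "\<And>y j k. Hf y $ j $ k = Hf y $ k $ j"
  shows "tensor_mat (T x) s $ j $ k = tensor_mat (T x) s $ k $ j"
proof -
  have d1: "((\<lambda>y. Hf y $ j $ k) has_derivative (\<lambda>h. tensor_mat (T x) h $ j $ k)) (at x)"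
    by (rule bounded_linear.has_derivative[OF bl_nth2 dH])
  have d2: "((\<lambda>y. Hf y $ k $ j) has_derivative (\<lambda>h. tensor_mat (T x) h $ k $ j)) (at x)"
    by (rule bounded_linear.has_derivative[OF bl_nth2 dH])
  have "(\<lambda>y. Hf y $ k $ j) = (\<lambda>y. Hf y $ j $ k)" using sym by auto
  then have "(\<lambda>h. tensor_mat (T x) h $ j $ k) = (\<lambda>h. tensor_mat (T x) h $ k $ j)"
    using has_derivative_unique[OF d1] d2 by metis
  then show ?thesis by metis
qed

lemma hess_taylor:
  fixes Hf :: "real^'d \<Rightarrow> real^'d^'d" and T :: "real^'d \<Rightarrow> real^'d^'d^'d"
  assumes dH: "\<And>y. (Hf has_derivative (\<lambda>h. tensor_mat (T y) h)) (at y)"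
    and lipT: "\<And>x y. tensor_norm (T x - T y) \<le> Lt * norm (x - y)"
  shows "norm ((Hf (x + s) - Hf x - tensor_mat (T x) s) *v v) \<le> Lt / 2 * (norm s)^2 * norm v"
proof -
  define c where "c = tensor_mat (T x) s *v v"
  define F where "F t = Hf (x + t *\<^sub>R s) *v v - t *\<^sub>R c" for t :: real
  define F' where "F' t = tensor_mat (T (x + t *\<^sub>R s)) s *v v - c" for t :: real
  define K where "K = Lt * (norm s)^2 * norm v"
  have dF: "(F has_derivative (\<lambda>dt. dt *\<^sub>R F' t)) (at t)" for t
  proof -
    have 1: "((\<lambda>t. x + t *\<^sub>R s) has_derivative (\<lambda>dt. dt *\<^sub>R s)) (at t)"
      by (intro derivative_eq_intros) auto
    have 2: "((\<lambda>t. Hf (x + t *\<^sub>R s)) has_derivative (\<lambda>dt. tensor_mat (T (x + t *\<^sub>R s)) (dt *\<^sub>R s))) (at t)"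
      by (rule has_derivative_compose[OF 1 dH])
    have 3: "((\<lambda>t. Hf (x + t *\<^sub>R s) *v v) has_derivative (\<lambda>dt. tensor_mat (T (x + t *\<^sub>R s)) (dt *\<^sub>R s) *v v)) (at t)"
      by (rule bounded_linear.has_derivative[OF bl_mv_left 2])
    have 4: "((\<lambda>t. t *\<^sub>R c) has_derivative (\<lambda>dt. dt *\<^sub>R c)) (at t)"
      by (intro derivative_eq_intros) auto
    have "(F has_derivative (\<lambda>dt. tensor_mat (T (x + t *\<^sub>R s)) (dt *\<^sub>R s) *v v - dt *\<^sub>R c)) (at t)"
      unfolding F_def by (rule has_derivative_diff[OF 3 4])
    moreover have "(\<lambda>dt. tensor_mat (T (x + t *\<^sub>R s)) (dt *\<^sub>R s) *v v - dt *\<^sub>R c) = (\<lambda>dt. dt *\<^sub>R F' t)"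
      by (rule ext) (simp add: F'_def tm_scaleR_right scaleR_matrix_vector_assoc[symmetric] scaleR_diff_right)
    ultimately show ?thesis by simp
  qed
  have bnd: "norm (F' t) \<le> K * t" if t: "0 < t" "t < 1" for t
  proof -
    have "F' t = tensor_mat (T (x + t *\<^sub>R s) - T x) s *v v"
      by (simp add: F'_def c_def tm_diff matrix_vector_mult_diff_rdistrib)
    then have "norm (F' t) \<le> tensor_norm (T (x + t *\<^sub>R s) - T x) * norm s * norm v"
      using tensor_mat_bound by metis
    also have "\<dots> \<le> (Lt * (t * norm s)) * norm s * norm v"
      using lipT[of "x + t *\<^sub>R s" x] t by (intro mult_right_mono) auto
    also have "\<dots> = K * t" by (simp add: K_def power2_eq_square)
    finally show ?thesis .
  qed
  have "norm (F 1 - F 0) \<le> K / 2 * 1^2 - K / 2 * 0^2"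
  proof (rule differentiable_bound_general[OF zero_less_one, where f' = F' and \<phi>' = "\<lambda>t. K * t"])
    show "continuous_on {0..1} F"
      by (rule continuous_at_imp_continuous_on) (auto intro: has_derivative_continuous[OF dF])
    show "continuous_on {0..1} (\<lambda>t. K / 2 * t^2)" by (intro continuous_intros)
    show "(F has_vector_derivative F' t) (at t)" for t
      unfolding has_vector_derivative_def by (rule dF)
    show "((\<lambda>t. K / 2 * t^2) has_vector_derivative K * t) (at t)" for t
      unfolding has_vector_derivative_def by (auto intro!: derivative_eq_intros simp: power2_eq_square algebra_simps)
    show "norm (F' t) \<le> K * t" if "0 < t" "t < 1" for t using bnd that .
  qed
  moreover have "F 1 - F 0 = (Hf (x + s) - Hf x - tensor_mat (T x) s) *v v"
    by (simp add: F_def c_def matrix_vector_mult_diff_rdistrib)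
  ultimately show ?thesis by (simp add: K_def)
qed


lemma avg_mv: "avg S F *v v = (1 / real (card S)) *\<^sub>R (\<Sum>i\<in>S. F i *v (v::real^'n))"
  unfolding avg_def by (simp add: scaleR_matrix_vector_assoc[symmetric] mv_sum)

lemma tm_avg: "tensor_mat (avg S F) s = avg S (\<lambda>i. tensor_mat (F i) s)"
  unfolding avg_def by (simp add: tm_scaleR tm_sum)

lemma avg_diff: "avg S (\<lambda>i. F i - G i) = avg S F - avg S G"
  unfolding avg_def by (simp add: sum_subtractf scaleR_diff_right)

lemma avg_bound:
  assumes "finite S" "S \<noteq> {}" "\<And>i. i \<in> S \<Longrightarrow> norm (F i *v v) \<le> K"
  shows "norm (avg S F *v (v::real^'n)) \<le> K"
proof -
  have cp: "real (card S) > 0" using assms by (simp add: card_gt_0_iff)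
  have "norm (avg S F *v v) = (1 / real (card S)) * norm (\<Sum>i\<in>S. F i *v v)"
    unfolding avg_mv by simp
  also have "\<dots> \<le> (1 / real (card S)) * (\<Sum>i\<in>S. norm (F i *v v))"
    by (intro mult_left_mono norm_sum) simp
  also have "\<dots> \<le> (1 / real (card S)) * (real (card S) * K)"
    by (intro mult_left_mono sum_bounded_above) (use assms in auto)
  also have "\<dots> = K" using cp by simp
  finally show ?thesis .
qed

lemma avg_sym:
  assumes "\<And>i. i \<in> S \<Longrightarrow> F i $ j $ k = F i $ k $ j"
  shows "avg S F $ j $ k = avg S F $ k $ j"
  unfolding avg_def using assms by simp

theorem lemma8:
  fixes n :: nat
    and fi :: "nat \<Rightarrow> real^'d \<Rightarrow> real"
    and gi :: "nat \<Rightarrow> real^'d \<Rightarrow> real^'d"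
    and Hi :: "nat \<Rightarrow> real^'d \<Rightarrow> real^'d^'d"
    and Ti :: "nat \<Rightarrow> real^'d \<Rightarrow> real^'d^'d^'d"
    and L_f L_g L_b L_t :: real
    and Sg Sb St :: "nat set"
    and xk :: "real^'d"
    and \<epsilon> \<kappa>_g \<kappa>_b \<kappa>_t :: real
  assumes n_pos: "n > 0"
    and d_f: "\<And>i x. i < n \<Longrightarrow> (fi i has_derivative (\<lambda>h. gi i x \<bullet> h)) (at x)"
    and d_g: "\<And>i x. i < n \<Longrightarrow> (gi i has_derivative (\<lambda>h. Hi i x *v h)) (at x)"
    and d_H: "\<And>i x. i < n \<Longrightarrow> (Hi i has_derivative (\<lambda>h. tensor_mat (Ti i x) h)) (at x)"
    and lip_f: "\<And>i x y. i < n \<Longrightarrow> \<bar>fi i x - fi i y\<bar> \<le> L_f * norm (x - y)"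
    and lip_g: "\<And>i x y. i < n \<Longrightarrow> norm (gi i x - gi i y) \<le> L_g * norm (x - y)"
    and lip_H: "\<And>i x y. i < n \<Longrightarrow> spec_norm (Hi i x - Hi i y) \<le> L_b * norm (x - y)"
    and lip_T: "\<And>i x y. i < n \<Longrightarrow> tensor_norm (Ti i x - Ti i y) \<le> L_t * norm (x - y)"
    and Sg: "Sg \<subseteq> {..<n}" "Sg \<noteq> {}"
    and Sb: "Sb \<subseteq> {..<n}" "Sb \<noteq> {}"
    and St: "St \<subseteq> {..<n}" "St \<noteq> {}"
    and eps_pos: "\<epsilon> > 0"
    and kappa_pos: "\<kappa>_g > 0" "\<kappa>_b > 0" "\<kappa>_t > 0"
    and samp_g: "norm (avg Sg (\<lambda>i. gi i xk) - avg {..<n} (\<lambda>i. gi i xk)) \<le> \<kappa>_g * \<epsilon>"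
    and samp_b: "\<And>s. norm ((avg Sb (\<lambda>i. Hi i xk) - avg {..<n} (\<lambda>i. Hi i xk)) *v s)
                    \<le> \<kappa>_b * \<epsilon> powr (2/3) * norm s"
    and samp_t: "\<And>s. norm (tensor_vec (avg St (\<lambda>i. Ti i xk)) s
                         - tensor_vec (avg {..<n} (\<lambda>i. Ti i xk)) s)
                    \<le> \<kappa>_t * \<epsilon> powr (1/3) * (norm s)\<^sup>2"
  shows "\<forall>s. spec_norm (avg {..<n} (\<lambda>i. Hi i (xk + s))
                   - (avg Sb (\<lambda>i. Hi i xk) + tensor_mat (avg St (\<lambda>i. Ti i xk)) s))
            \<le> (L_t / 2 + \<kappa>_t / 2) * (norm s)\<^sup>2 + (\<kappa>_b + \<kappa>_t / 2) * \<epsilon> powr (2/3)"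
proof
  fix s :: "real^'d"
  define x where "x = xk"
  define E where "E i = Hi i (x + s) - Hi i x - tensor_mat (Ti i x) s" for i
  define Hf where "Hf = avg {..<n} (\<lambda>i. Hi i x)"
  define Bk where "Bk = avg Sb (\<lambda>i. Hi i x)"
  define Tf where "Tf = avg {..<n} (\<lambda>i. Ti i x)"
  define Tk where "Tk = avg St (\<lambda>i. Ti i x)"
  define e1 where "e1 = \<epsilon> powr (1/3)"
  have e2: "\<epsilon> powr (2/3) = e1^2"
    unfolding e1_def power2_eq_square powr_add[symmetric] by simp
  have e1p: "e1 \<ge> 0" unfolding e1_def by simp
  have ident: "avg {..<n} (\<lambda>i. Hi i (xk + s)) - (Bk + tensor_mat Tk s)
      = avg {..<n} E + (Hf - Bk) + tensor_mat (Tf - Tk) s"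
  proof -
    have "avg {..<n} E = avg {..<n} (\<lambda>i. Hi i (x + s)) - Hf - tensor_mat Tf s"
      unfolding E_def Hf_def Tf_def tm_avg avg_diff by simp
    then show ?thesis unfolding tm_diff x_def by (simp add: algebra_simps)
  qed
  have symH: "Hi i y $ j $ k = Hi i y $ k $ j" if "i < n" for i y j k
    by (rule hess_sym[OF d_f[OF that] d_g[OF that] lip_H[OF that]])
  have symT: "tensor_mat (Ti i x) s $ j $ k = tensor_mat (Ti i x) s $ k $ j" if "i < n" for i j k
    by (rule tmat_sym[OF d_H[OF that] symH[OF that]])
  have b1: "norm (avg {..<n} E *v v) \<le> L_t / 2 * (norm s)^2 * norm v" for v
  proof (rule avg_bound)
    show "finite {..<n}" by simp
    show "{..<n} \<noteq> {}" using n_pos by auto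
    show "norm (E i *v v) \<le> L_t / 2 * (norm s)^2 * norm v" if "i \<in> {..<n}" for i
      unfolding E_def using that by (intro hess_taylor[OF d_H lip_T]) auto
  qed
  have b2: "norm ((Hf - Bk) *v v) \<le> \<kappa>_b * e1^2 * norm v" for v
    using samp_b[of v] unfolding Hf_def Bk_def e2[symmetric] x_def
    by (simp add: norm_minus_commute matrix_vector_mult_diff_rdistrib)
  have b3: "norm (tensor_mat (Tf - Tk) s *v v) \<le> (\<kappa>_t * e1 * norm s) * norm v" for v
  proof (rule sym_quad_bound)
    show "tensor_mat (Tf - Tk) s $ j $ k = tensor_mat (Tf - Tk) s $ k $ j" for j k
    proof -
      have "tensor_mat Tf s $ j $ k = tensor_mat Tf s $ k $ j"
        unfolding Tf_def tm_avg by (rule avg_sym) (use symT in auto)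
      moreover have "tensor_mat Tk s $ j $ k = tensor_mat Tk s $ k $ j"
        unfolding Tk_def tm_avg by (rule avg_sym) (use symT St in auto)
      ultimately show ?thesis unfolding tm_diff by simp
    qed
    show "\<bar>u \<bullet> (tensor_mat (Tf - Tk) s *v u)\<bar> \<le> \<kappa>_t * e1 * norm s * (norm u)^2" for u
    proof -
      have "\<bar>u \<bullet> (tensor_mat (Tf - Tk) s *v u)\<bar> = \<bar>s \<bullet> tensor_vec (Tf - Tk) u\<bar>"
        by (simp add: quad_form_tensor)
      also have "\<dots> \<le> norm s * norm (tensor_vec (Tf - Tk) u)" by (rule Cauchy_Schwarz_ineq2)
      also have "norm (tensor_vec (Tf - Tk) u) \<le> \<kappa>_t * e1 * (norm u)^2"
        using samp_t[of u] unfolding tv_diff Tf_def Tk_def e1_def x_def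
        by (simp add: norm_minus_commute)
      then have "norm s * norm (tensor_vec (Tf - Tk) u) \<le> norm s * (\<kappa>_t * e1 * (norm u)^2)"
        by (rule mult_left_mono) simp
      finally show ?thesis by (simp add: algebra_simps)
    qed
  qed
  have amgm: "\<kappa>_t * e1 * norm s \<le> \<kappa>_t / 2 * (norm s)^2 + \<kappa>_t / 2 * e1^2"
  proof -
    have "0 \<le> \<kappa>_t / 2 * (e1 - norm s)^2" using kappa_pos by simp
    then show ?thesis by (simp add: power2_eq_square algebra_simps)
  qed
  have "onorm (\<lambda>v. (avg {..<n} (\<lambda>i. Hi i (xk + s)) - (Bk + tensor_mat Tk s)) *v v)
        \<le> (L_t / 2 + \<kappa>_t / 2) * (norm s)\<^sup>2 + (\<kappa>_b + \<kappa>_t / 2) * e1^2"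
  proof (rule onorm_le)
    fix v :: "real^'d"
    have "norm ((avg {..<n} (\<lambda>i. Hi i (xk + s)) - (Bk + tensor_mat Tk s)) *v v)
          = norm (avg {..<n} E *v v + (Hf - Bk) *v v + tensor_mat (Tf - Tk) s *v v)"
      unfolding ident by (simp add: matrix_vector_mult_add_rdistrib)
    also have "\<dots> \<le> norm (avg {..<n} E *v v) + norm ((Hf - Bk) *v v) + norm (tensor_mat (Tf - Tk) s *v v)"
      by (rule order_trans[OF norm_triangle_ineq add_right_mono[OF norm_triangle_ineq]])
    also have "\<dots> \<le> L_t / 2 * (norm s)^2 * norm v + \<kappa>_b * e1^2 * norm v + (\<kappa>_t * e1 * norm s) * norm v"
      using b1 b2 b3 by (intro add_mono) auto
    also have "\<dots> \<le> ((L_t / 2 + \<kappa>_t / 2) * (norm s)\<^sup>2 + (\<kappa>_b + \<kappa>_t / 2) * e1^2) * norm v"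
      using mult_right_mono[OF amgm norm_ge_zero[of v]] by (simp add: algebra_simps)
    finally show "norm ((avg {..<n} (\<lambda>i. Hi i (xk + s)) - (Bk + tensor_mat Tk s)) *v v)
          \<le> ((L_t / 2 + \<kappa>_t / 2) * (norm s)\<^sup>2 + (\<kappa>_b + \<kappa>_t / 2) * e1^2) * norm v" .
  qed
  then show "spec_norm (avg {..<n} (\<lambda>i. Hi i (xk + s))
                   - (avg Sb (\<lambda>i. Hi i xk) + tensor_mat (avg St (\<lambda>i. Ti i xk)) s))
            \<le> (L_t / 2 + \<kappa>_t / 2) * (norm s)\<^sup>2 + (\<kappa>_b + \<kappa>_t / 2) * \<epsilon> powr (2/3)"
    unfolding spec_norm_def e2 Bk_def Tk_def x_def .
qed

end
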